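(* Let $n,m\ge1$. Let $A\in\mathbb{R}^{n\times nm}$ and $C\in\mathbb{R}^{m\times nm}$ be random matrices. Let $D\in\mathbb{R}^{nm\times nm}$ be a fixed diagonal matrix with all diagonal entries nonzero, and let $w\in\mathbb{R}^{nm}$ be a fixed nonzero vector. Set $B=(AD)\odot C\in\mathbb{R}^{nm\times nm}$. Then, with probability $1$, $B$ is invertible and, for every $i\in[nm]$, $\langle (B^{-1})_i,w\rangle\neq0$, where $(B^{-1})_i$ denotes the $i$-th row of $B^{-1}$.
   Context: "Random" matrices have independent, identically distributed entries drawn from a continuous distribution, independently of each other. For $A\in\mathbb{R}^{n\times N}$ and $C\in\mathbb{R}^{m\times N}$, the Khatri–Rao product $A\odot C\in\mathbb{R}^{nm\times N}$ is the matrix whose $k$-th column is the Kronecker product $A_k\otimes C_k$ of the $k$-th columns of $A$ and $C$. *)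

theory Defs
  imports "HOL-Analysis.Analysis" "HOL-Probability.Probability"
begin

text \<open>Khatri--Rao product: column k of the result is the Kronecker product of
  column k of A and column k of C; the row index (i,j) (lexicographic order on
  pairs) corresponds to the row (i-1)m + j of the Kronecker product.\<close>
definition khatri_rao :: "real^'k^'n \<Rightarrow> real^'k^'m \<Rightarrow> real^'k^('n \<times> 'm)" where
  "khatri_rao A C = (\<chi> p k. A $ fst p $ k * C $ snd p $ k)"

definition diagonal_mat :: "real^'k^'k \<Rightarrow> bool" where
  "diagonal_mat D \<longleftrightarrow> (\<forall>i j. i \<noteq> j \<longrightarrow> D $ i $ j = 0)"

end

theory Submission
  imports Defs
begin

lemma upd_meas:
  assumes sets: "\<And>i. sets (\<mu> i) = sets (borel::real measure)"
  shows "(\<lambda>x. x(j:=c)) \<in> measurable (PiM S \<mu>) (PiM (insert j S) \<mu>)"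
proof -
  have sp: "\<And>i. space (\<mu> i) = UNIV" using sets_eq_imp_space_eq[OF sets] by simp
  have "(\<lambda>x i. (x(j:=c)) i) \<in> measurable (PiM S \<mu>) (PiM (insert j S) \<mu>)"
  proof (rule measurable_PiM_single')
    fix i assume "i \<in> insert j S"
    then show "(\<lambda>x. (x(j:=c)) i) \<in> measurable (PiM S \<mu>) (\<mu> i)"
      by (cases "i = j") (auto simp: sp)
  next
    show "(\<lambda>x i. (x(j := c)) i) \<in> space (PiM S \<mu>) \<rightarrow> (\<Pi>\<^sub>E i\<in>insert j S. space (\<mu> i))"
      by (auto simp: space_PiM PiE_def extensional_def sp)
  qed
  then show ?thesis by (simp add: fun_upd_def)
qed

lemma key:
  fixes \<mu> :: "'i \<Rightarrow> real measure"
  assumes S: "finite S"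
   and P: "\<And>i. prob_space (\<mu> i)" and sets: "\<And>i. sets (\<mu> i) = sets borel"
   and atom: "\<And>i t. emeasure (\<mu> i) {t} = 0"
  shows "(\<And>x p t. F (x(p:=t)) = F (x(p:=0)) + t * (F (x(p:=1)) - F (x(p:=0))))
     \<Longrightarrow> (\<And>x y. (\<And>i. i\<in>S \<Longrightarrow> x i = y i) \<Longrightarrow> F x = F y)
     \<Longrightarrow> F \<in> borel_measurable (PiM S \<mu>) \<Longrightarrow> (\<exists>x. F x \<noteq> 0) \<Longrightarrow> AE x in PiM S \<mu>. F x \<noteq> 0"
  using S
proof (induction S arbitrary: F rule: finite_induct)
  case empty
  from empty.prems(4) obtain x0 where x0: "F x0 \<noteq> 0" by blast
  have nz: "F x \<noteq> 0" for x
  proof -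
    have "F x = F x0" by (rule empty.prems(2)) simp
    with x0 show ?thesis by simp
  qed
  show ?case by (simp add: nz)
next
  case (insert j S F)
  note aff = insert.prems(1) and dep = insert.prems(2) and Fm = insert.prems(3)
  define a where "a x = F (x(j:=0))" for x
  define b where "b x = F (x(j:=1)) - F (x(j:=0))" for x
  have Fab: "F x = a x + x j * b x" for x
    using aff[of x j "x j"] unfolding fun_upd_triv a_def b_def .
  have affupd: "F ((x(j:=c))(p:=t)) = F ((x(j:=c))(p:=0)) + t * (F ((x(j:=c))(p:=1)) - F ((x(j:=c))(p:=0)))" for x p t c
    by (rule aff)
  have affa: "a (x(p:=t)) = a (x(p:=0)) + t * (a (x(p:=1)) - a (x(p:=0)))" for x p t
  proof (cases "p = j")
    case False
    then have "\<And>s. (x(p:=s))(j:=0) = (x(j:=0))(p:=s)" by (rule fun_upd_twist)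
    then show ?thesis using affupd[of x 0 p t] by (simp add: a_def)
  qed (simp add: a_def)
  have affb: "b (x(p:=t)) = b (x(p:=0)) + t * (b (x(p:=1)) - b (x(p:=0)))" for x p t
  proof (cases "p = j")
    case False
    then have "\<And>s c. (x(p:=s))(j:=c) = (x(j:=c))(p:=s)" by (rule fun_upd_twist)
    then show ?thesis using affupd[of x 0 p t] affupd[of x 1 p t] by (simp add: b_def algebra_simps)
  qed (simp add: b_def)
  have depa: "a x = a y" if "\<And>i. i\<in>S \<Longrightarrow> x i = y i" for x y
    unfolding a_def by (rule dep) (use that in auto)
  have depb: "b x = b y" if "\<And>i. i\<in>S \<Longrightarrow> x i = y i" for x y
  proof -
    have "F (x(j:=1)) = F (y(j:=1))" by (rule dep) (use that in auto)
    moreover have "F (x(j:=0)) = F (y(j:=0))" by (rule dep) (use that in auto)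
    ultimately show ?thesis by (simp add: b_def)
  qed
  have ma: "a \<in> borel_measurable (PiM S \<mu>)"
    unfolding a_def by (rule measurable_compose[OF upd_meas[OF sets] Fm])
  have mb: "b \<in> borel_measurable (PiM S \<mu>)"
    unfolding b_def by (intro borel_measurable_diff measurable_compose[OF upd_meas[OF sets] Fm])
  have AEab: "AE x in PiM S \<mu>. a x \<noteq> 0 \<or> b x \<noteq> 0"
  proof (cases "\<exists>x. b x \<noteq> 0")
    case True
    have "AE x in PiM S \<mu>. b x \<noteq> 0" by (rule insert.IH[OF affb depb mb True])
    then show ?thesis by auto
  next
    case False
    then have "\<exists>x. a x \<noteq> 0" using insert.prems(4) Fab by force
    have "AE x in PiM S \<mu>. a x \<noteq> 0" by (rule insert.IH[OF affa depa ma \<open>\<exists>x. a x \<noteq> 0\<close>])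
    then show ?thesis by auto
  qed
  interpret product_sigma_finite \<mu>
    unfolding product_sigma_finite_def using P prob_space_imp_sigma_finite by blast
  define Z where "Z = {x \<in> space (PiM (insert j S) \<mu>). F x = 0}"
  have Zeq: "Z = F -` {0} \<inter> space (PiM (insert j S) \<mu>)" unfolding Z_def by auto
  have Zm: "Z \<in> sets (PiM (insert j S) \<mu>)" unfolding Zeq by (rule measurable_sets[OF Fm]) simp
  have inner: "(\<integral>\<^sup>+ y. indicator Z (x(j:=y)) \<partial>(\<mu> j)) = 0"
    if x: "x \<in> space (PiM S \<mu>)" and ab: "a x \<noteq> 0 \<or> b x \<noteq> 0" for x
  proof -
    have xs: "x(j:=y) \<in> space (PiM (insert j S) \<mu>)" for y
      using measurable_space[OF upd_meas[OF sets] x] .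
    have "indicator Z (x(j:=y)) = (indicator {y. a x + y * b x = 0} y :: ennreal)" for y
      using Fab[of "x(j:=y)"] xs[of y] by (simp add: Z_def a_def b_def indicator_def)
    then have eq: "(\<integral>\<^sup>+ y. indicator Z (x(j:=y)) \<partial>(\<mu> j)) = (\<integral>\<^sup>+ y. indicator {y. a x + y * b x = 0} y \<partial>(\<mu> j))"
      by simp
    show ?thesis
    proof (cases "b x = 0")
      case True
      then have "{y. a x + y * b x = 0} = {}" using ab by auto
      then show ?thesis using eq by simp
    next
      case False
      then have "{y. a x + y * b x = 0} = {- a x / b x}" by (auto simp: field_simps)
      moreover have "{- a x / b x} \<in> sets (\<mu> j)" by (simp add: sets)
      ultimately show ?thesis using eq atom by simp
    qed
  qed
  have "emeasure (PiM (insert j S) \<mu>) Z = (\<integral>\<^sup>+ x. indicator Z x \<partial>PiM (insert j S) \<mu>)"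
    using Zm by simp
  also have "\<dots> = (\<integral>\<^sup>+ x. (\<integral>\<^sup>+ y. indicator Z (x(j:=y)) \<partial>(\<mu> j)) \<partial>(PiM S \<mu>))"
    by (rule product_nn_integral_insert) (use insert.hyps Zm in auto)
  also have "\<dots> = (\<integral>\<^sup>+ x. 0 \<partial>(PiM S \<mu>))"
    by (rule nn_integral_cong_AE) (use AEab inner in auto)
  finally have "emeasure (PiM (insert j S) \<mu>) Z = 0" by simp
  then show ?case
    using AE_iff_measurable[OF Zm] Z_def by auto
qed

lemma det_affine_col:
  fixes f :: "real \<Rightarrow> real^'k::finite^'k"
  assumes other: "\<And>t i j. j \<noteq> k \<Longrightarrow> f t $ i $ j = f 0 $ i $ j"
    and col: "\<And>t i. f t $ i $ k = f 0 $ i $ k + t * (f 1 $ i $ k - f 0 $ i $ k)"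
  shows "det (f t) = det (f 0) + t * (det (f 1) - det (f 0))"
proof -
  define T0 where "T0 = transpose (f 0)"
  define V where "V = transpose (f 1) - transpose (f 0)"
  have tr: "transpose (f s) = (\<chi> i. if i = k then T0$i + s *s V$i else T0$i)" for s
  proof -
    have "transpose (f s) $ a $ b = (\<chi> i. if i = k then T0$i + s *s V$i else T0$i) $ a $ b" for a b
    proof (cases "a = k")
      case True
      have c: "f s $ b $ k = f 0 $ b $ k + s * (f 1 $ b $ k - f 0 $ b $ k)" by (rule col)
      show ?thesis using True by (simp add: T0_def V_def transpose_def c right_diff_distrib)
    next
      case False
      have c: "f s $ b $ a = f 0 $ b $ a" using False by (rule other)
      show ?thesis using False by (simp add: T0_def transpose_def c)
    qed
    then show ?thesis by (simp add: vec_eq_iff)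
  qed
  have T0eq: "(\<chi> i. if i = k then T0$i else T0$i) = T0" by (simp add: vec_eq_iff)
  define E where "E = det ((\<chi> i. if i = k then V$i else T0$i)::real^'k^'k)"
  have main: "det (f s) = det (f 0) + s * E" for s
  proof -
    have "det (f s) = det (transpose (f s))" by (simp add: det_transpose)
    also have "\<dots> = det ((\<chi> i. if i = k then T0$i else T0$i)::real^'k^'k) + det ((\<chi> i. if i = k then s *s V$i else T0$i)::real^'k^'k)"
      unfolding tr by (rule det_row_add)
    also have "\<dots> = det T0 + s * E"
      unfolding T0eq E_def by (simp add: det_row_mul)
    finally show ?thesis by (simp add: T0_def det_transpose)
  qed
  show ?thesis using main[of t] main[of 1] by simp
qed

definition Bm :: "real^('n::finite \<times> 'm::finite)^('n\<times>'m) \<Rightarrow> (('n \<times> ('n \<times> 'm)) + ('m \<times> ('n \<times> 'm)) \<Rightarrow> real) \<Rightarrow> real^('n\<times>'m)^('n\<times>'m)" where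
  "Bm D x = khatri_rao (((\<chi> i k. x (Inl (i,k))) :: real^('n \<times> 'm)^'n) ** D) ((\<chi> j k. x (Inr (j,k))) :: real^('n \<times> 'm)^'m)"

lemma Bm_entry:
  assumes "diagonal_mat D"
  shows "Bm D x $ a $ k = x (Inl (fst a, k)) * D$k$k * x (Inr (snd a, k))"
proof -
  have d: "\<And>l. l \<noteq> k \<Longrightarrow> D$l$k = 0" using assms unfolding diagonal_mat_def by blast
  have "(\<Sum>l\<in>UNIV. x (Inl (fst a, l)) * D $ l $ k) = (\<Sum>l\<in>UNIV. if l = k then x (Inl (fst a, k)) * D $ k $ k else 0)"
    by (rule sum.cong) (simp_all add: d)
  then show ?thesis by (simp add: Bm_def khatri_rao_def matrix_matrix_mult_def)
qed

fun colp :: "('n \<times> 'k) + ('m \<times> 'k) \<Rightarrow> 'k" where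
  "colp (Inl (i,k)) = k" | "colp (Inr (j,k)) = k"

lemma Bm_other:
  assumes "diagonal_mat D" "j \<noteq> colp p"
  shows "Bm D (x(p:=t)) $ i $ j = Bm D (x(p:=0)) $ i $ j"
  using assms(2) by (cases p) (auto simp: Bm_entry[OF assms(1)])

lemma Bm_col:
  assumes "diagonal_mat D"
  shows "Bm D (x(p:=t)) $ i $ colp p = Bm D (x(p:=0)) $ i $ colp p + t * (Bm D (x(p:=1)) $ i $ colp p - Bm D (x(p:=0)) $ i $ colp p)"
  by (cases p) (auto simp: Bm_entry[OF assms] algebra_simps)

lemma aff0:
  assumes "diagonal_mat D"
  shows "det (Bm D (x(p:=t))) = det (Bm D (x(p:=0))) + t * (det (Bm D (x(p:=1))) - det (Bm D (x(p:=0))))"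
  apply (rule det_affine_col[of "colp p" "\<lambda>t. Bm D (x(p:=t))" t])
   apply (erule Bm_other[OF assms])
  apply (rule Bm_col[OF assms])
  done

lemma affr:
  assumes "diagonal_mat D"
  shows "det (\<chi> i j. if j = r then w$i else Bm D (x(p:=t)) $ i $ j) = det (\<chi> i j. if j = r then w$i else Bm D (x(p:=0)) $ i $ j) + t * (det (\<chi> i j. if j = r then w$i else Bm D (x(p:=1)) $ i $ j) - det (\<chi> i j. if j = r then w$i else Bm D (x(p:=0)) $ i $ j))"
  apply (rule det_affine_col[of "colp p" "\<lambda>t. (\<chi> i j. if j = r then w$i else Bm D (x(p:=t)) $ i $ j)" t])
  subgoal for t i j
    apply (simp only: vec_lambda_beta)
    apply (rule if_cong[OF refl refl])
    apply (rule Bm_other[OF assms])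
    apply assumption
    done
  subgoal for t i
    apply (simp only: vec_lambda_beta)
    apply (cases "colp p = r")
     apply simp
    apply (simp only: if_False)
    apply (rule Bm_col[OF assms])
    done
  done

lemma witness:
  fixes D :: "real^('n::finite \<times> 'm::finite)^('n\<times>'m)" and w :: "real^('n\<times>'m)"
  assumes diag: "diagonal_mat D" and dnz: "\<And>k. D$k$k \<noteq> 0" and wq: "w$q \<noteq> 0"
  shows "\<exists>x. det (Bm D x) \<noteq> 0 \<and> det (\<chi> i j. if j = r then w$i else Bm D x $ i $ j) \<noteq> 0"
proof -
  define \<pi> where "\<pi> k = (if k = r then q else if k = q then r else k)" for k
  have pp: "\<pi> (\<pi> k) = k" for k by (simp add: \<pi>_def)
  have pinj: "\<pi> k = \<pi> l \<longleftrightarrow> k = l" for k l by (metis pp)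
  define x0 :: "('n \<times> ('n \<times> 'm)) + ('m \<times> ('n \<times> 'm)) \<Rightarrow> real" where
    "x0 = case_sum (\<lambda>(i,k). if i = fst (\<pi> k) then 1 else 0) (\<lambda>(j,k). if j = snd (\<pi> k) then 1 else 0)"
  define B where "B = Bm D x0"
  have Be: "B $ a $ k = (if a = \<pi> k then D$k$k else 0)" for a k
    unfolding B_def Bm_entry[OF diag] x0_def by (cases a; cases "\<pi> k") auto
  have mv: "(B *v v) $ (\<pi> k) = D$k$k * v$k" for v k
  proof -
    have "(B *v v) $ (\<pi> k) = (\<Sum>l\<in>UNIV. (if k = l then D$l$l else 0) * v$l)"
      unfolding matrix_vector_mult_def by (simp add: Be pinj)
    also have "\<dots> = (\<Sum>l\<in>UNIV. if k = l then D$k$k * v$k else 0)"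
      by (rule sum.cong) auto
    finally show ?thesis by simp
  qed
  have "\<forall>v. B *v v = 0 \<longrightarrow> v = 0"
  proof (intro allI impI)
    fix v :: "real^('n\<times>'m)" assume "B *v v = 0"
    then have "D$k$k * v$k = 0" for k using mv[of v k] by simp
    then show "v = 0" using dnz by (simp add: vec_eq_iff)
  qed
  then have inv: "invertible B" by (simp add: invertible_left_inverse matrix_left_invertible_ker)
  then have d0: "det B \<noteq> 0" by (simp add: invertible_det_nz)
  define y where "y = (\<chi> k. w$(\<pi> k) / D$k$k)"
  have "(B *v y) $ a = w $ a" for a
    using mv[of y "\<pi> a"] dnz[of "\<pi> a"] by (simp add: pp y_def)
  then have By: "B *v y = w" by (simp add: vec_eq_iff)
  have "det (\<chi> i j. if j = r then w$i else B $ i $ j) = y$r * det B"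
    using cramer_lemma[of r B y] unfolding By .
  moreover have "y$r \<noteq> 0" using wq dnz[of r] by (simp add: y_def \<pi>_def)
  ultimately show ?thesis using d0 unfolding B_def by auto
qed


lemma det_meas:
  fixes G :: "'a \<Rightarrow> real^'k::finite^'k"
  assumes "\<And>a k. (\<lambda>x. G x $ a $ k) \<in> borel_measurable N"
  shows "(\<lambda>x. det (G x)) \<in> borel_measurable N"
  unfolding det_def
  by (intro borel_measurable_sum borel_measurable_times measurable_const borel_measurable_prod assms) simp_all

lemma inv_part:
  fixes B :: "real^'k::finite^'k" and w :: "real^'k"
  assumes d: "det B \<noteq> 0" and dr: "\<And>r. det (\<chi> i j. if j = r then w$i else B$i$j) \<noteq> 0"
  shows "invertible B \<and> (\<forall>r. matrix_inv B $ r \<bullet> w \<noteq> 0)"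
proof -
  have inv: "invertible B" using d by (simp add: invertible_det_nz)
  then have "B ** matrix_inv B = mat 1"
    unfolding invertible_def matrix_inv_def by (rule someI2_ex) auto
  then have By: "B *v (matrix_inv B *v w) = w"
    by (simp add: matrix_vector_mul_assoc)
  have "matrix_inv B $ r \<bullet> w \<noteq> 0" for r
  proof -
    have "det (\<chi> i j. if j = r then w$i else B$i$j) = (matrix_inv B *v w) $ r * det B"
      using cramer_lemma[of r B "matrix_inv B *v w"] unfolding By .
    then have "(matrix_inv B *v w) $ r \<noteq> 0" using dr[of r] by auto
    then show ?thesis by (simp add: matrix_vector_mult_def inner_vec_def)
  qed
  then show ?thesis using inv by auto
qed

theorem lemma4p2:
  fixes M :: "'w measure"
    and X :: "('n::finite \<times> ('n \<times> 'm::finite)) + ('m \<times> ('n \<times> 'm)) \<Rightarrow> 'w \<Rightarrow> real"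
    and D :: "real^('n \<times> 'm)^('n \<times> 'm)"
    and w :: "real^('n \<times> 'm)"
  assumes "prob_space M"
    and indep: "prob_space.indep_vars M (\<lambda>_. borel) X UNIV"
    and identA: "\<And>p q. distr M borel (X (Inl p)) = distr M borel (X (Inl q))"
    and identC: "\<And>p q. distr M borel (X (Inr p)) = distr M borel (X (Inr q))"
    and continuous: "\<And>p x. measure M {\<omega> \<in> space M. X p \<omega> = x} = 0"
    and D_diag: "diagonal_mat D"
    and D_nz: "\<And>k. D $ k $ k \<noteq> 0"
    and w_nz: "w \<noteq> 0"
  shows "AE \<omega> in M.
           (let A = (\<chi> i k. X (Inl (i, k)) \<omega>) :: real^('n \<times> 'm)^'n;
                C = (\<chi> j k. X (Inr (j, k)) \<omega>) :: real^('n \<times> 'm)^'m;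
                B = khatri_rao (A ** D) C
            in invertible B \<and> (\<forall>r. matrix_inv B $ r \<bullet> w \<noteq> 0))"
proof -
  interpret prob_space M by fact
  have rv0: "\<forall>i\<in>UNIV. random_variable borel (X i)"
    using conjunct1[OF indep[unfolded indep_vars_def2]] .
  have rv: "\<And>i. random_variable borel (X i)" using rv0 by blast
  define \<mu> where "\<mu> i = distr M borel (X i)" for i
  have P\<mu>: "\<And>i. prob_space (\<mu> i)" by (simp add: \<mu>_def prob_space_distr rv)
  have s\<mu>: "\<And>i. sets (\<mu> i) = sets borel" by (simp add: \<mu>_def)
  have a\<mu>: "emeasure (\<mu> i) {t} = 0" for i t
  proof -
    have "emeasure (\<mu> i) {t} = emeasure M (X i -` {t} \<inter> space M)"
      unfolding \<mu>_def by (rule emeasure_distr[OF rv]) simp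
    also have "X i -` {t} \<inter> space M = {\<omega> \<in> space M. X i \<omega> = t}" by auto
    also have "emeasure M \<dots> = measure M {\<omega> \<in> space M. X i \<omega> = t}"
      by (simp add: emeasure_eq_measure)
    finally show ?thesis using continuous by simp
  qed
  have eqd: "distr M (PiM UNIV (\<lambda>i. borel)) (\<lambda>\<omega>. \<lambda>i\<in>UNIV. X i \<omega>) = PiM UNIV \<mu>"
    unfolding \<mu>_def by (rule iffD1[OF indep_vars_iff_distr_eq_PiM indep]) (simp_all add: rv)
  have mZ: "(\<lambda>\<omega>. \<lambda>i\<in>UNIV. X i \<omega>) \<in> measurable M (PiM UNIV (\<lambda>i. borel))"
    by (rule measurable_restrict) (simp add: rv)
  have setsP: "sets (PiM UNIV \<mu>) = sets (PiM UNIV (\<lambda>i. borel))"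
    by (rule sets_PiM_cong) (simp_all add: s\<mu>)
  obtain q where wq: "w $ q \<noteq> 0" using w_nz by (auto simp: vec_eq_iff)
  have comp: "(\<lambda>x. x i) \<in> borel_measurable (PiM UNIV (\<lambda>_. borel))" for i :: "('n \<times> ('n \<times> 'm)) + ('m \<times> ('n \<times> 'm))"
    by (rule measurable_component_singleton) simp
  have ment: "(\<lambda>x. Bm D x $ a $ k) \<in> borel_measurable (PiM UNIV (\<lambda>_. borel))" for a k
    unfolding Bm_entry[OF D_diag] by (intro borel_measurable_times comp measurable_const) simp_all
  have m0: "(\<lambda>x. det (Bm D x)) \<in> borel_measurable (PiM UNIV \<mu>)"
    unfolding measurable_cong_sets[OF setsP refl]
    by (rule det_meas) (rule ment)
  have mr: "(\<lambda>x. det (\<chi> i j. if j = r then w$i else Bm D x $ i $ j)) \<in> borel_measurable (PiM UNIV \<mu>)" for r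
    unfolding measurable_cong_sets[OF setsP refl]
    apply (rule det_meas)
    subgoal for a k by (cases "k = r") (simp_all add: ment)
    done
  have AE0: "AE x in PiM UNIV \<mu>. det (Bm D x) \<noteq> 0"
    apply (rule key[OF _ P\<mu> s\<mu> a\<mu>, of UNIV "\<lambda>x. det (Bm D x)"])
        apply simp
       apply (rule aff0[OF D_diag])
      apply (subgoal_tac "x = y", simp, rule ext, simp)
     apply (rule m0)
    using witness[OF D_diag D_nz wq] by blast
  have AEr: "AE x in PiM UNIV \<mu>. det (\<chi> i j. if j = r then w$i else Bm D x $ i $ j) \<noteq> 0" for r
    apply (rule key[OF _ P\<mu> s\<mu> a\<mu>, of UNIV "\<lambda>x. det (\<chi> i j. if j = r then w$i else Bm D x $ i $ j)"])
        apply simp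
       apply (rule affr[OF D_diag])
      apply (subgoal_tac "x = y", simp, rule ext, simp)
     apply (rule mr)
    using witness[OF D_diag D_nz wq, of r] by blast
  have "AE x in PiM UNIV \<mu>. \<forall>r\<in>UNIV. det (\<chi> i j. if j = r then w$i else Bm D x $ i $ j) \<noteq> 0"
    by (subst AE_finite_all) (use AEr in auto)
  with AE0 have "AE x in PiM UNIV \<mu>. det (Bm D x) \<noteq> 0 \<and> (\<forall>r. det (\<chi> i j. if j = r then w$i else Bm D x $ i $ j) \<noteq> 0)"
    by eventually_elim auto
  then have "AE x in distr M (PiM UNIV (\<lambda>i. borel)) (\<lambda>\<omega>. \<lambda>i\<in>UNIV. X i \<omega>). det (Bm D x) \<noteq> 0 \<and> (\<forall>r. det (\<chi> i j. if j = r then w$i else Bm D x $ i $ j) \<noteq> 0)"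
    unfolding eqd .
  from AE_distrD[OF mZ this] have "AE \<omega> in M. det (Bm D (\<lambda>i\<in>UNIV. X i \<omega>)) \<noteq> 0 \<and> (\<forall>r. det (\<chi> i j. if j = r then w$i else Bm D (\<lambda>i\<in>UNIV. X i \<omega>) $ i $ j) \<noteq> 0)" .
  then show ?thesis
  proof (rule AE_mp, intro AE_I2 impI)
    fix \<omega> assume h: "det (Bm D (\<lambda>i\<in>UNIV. X i \<omega>)) \<noteq> 0 \<and> (\<forall>r. det (\<chi> i j. if j = r then w$i else Bm D (\<lambda>i\<in>UNIV. X i \<omega>) $ i $ j) \<noteq> 0)"
    have "invertible (Bm D (\<lambda>i. X i \<omega>)) \<and> (\<forall>r. matrix_inv (Bm D (\<lambda>i. X i \<omega>)) $ r \<bullet> w \<noteq> 0)"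
      by (rule inv_part) (use h[unfolded restrict_UNIV] in blast)+
    then show "let A = (\<chi> i k. X (Inl (i, k)) \<omega>) :: real^('n \<times> 'm)^'n;
                C = (\<chi> j k. X (Inr (j, k)) \<omega>) :: real^('n \<times> 'm)^'m;
                B = khatri_rao (A ** D) C
            in invertible B \<and> (\<forall>r. matrix_inv B $ r \<bullet> w \<noteq> 0)"
      unfolding Let_def Bm_def .
  qed
qed

end
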